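(* Let $G$ be a finite simple graph with $n$ vertices and minimum degree $\delta$, and let $k$ be a positive integer. Then $\gamma_{gr}^{t,k}(G)\leq n-\delta+k$ and $\gamma_{gr}^{Z,k}(G)\leq\gamma_{gr}^{k}(G)\leq n-\delta+k-1$.
   Context: For a vertex $v$, $N(v)$ is its open neighborhood and $N[v]=N(v)\cup\{v\}$. A sequence $S=(v_1,\ldots,v_m)$ of distinct vertices is a $k$-sequence (resp. $k$-$Z$-sequence, $k$-$t$-sequence) if for each $i\in[m]$ there is a vertex $u_i$ with $u_i\in N[v_i]$ (resp. $N(v_i)$, $N(v_i)$) such that the number of indices $j<i$ with $u_i\in N[v_j]$ (resp. $N[v_j]$, $N(v_j)$) is less than $k$. The numbers $\gamma_{gr}^{k}(G)$, $\gamma_{gr}^{Z,k}(G)$, $\gamma_{gr}^{t,k}(G)$ are the maximum lengths of a $k$-sequence, $k$-$Z$-sequence, $k$-$t$-sequence of $G$, respectively. *)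

theory Defs
  imports Main
begin

definition simple_graph :: "'a set \<Rightarrow> ('a \<Rightarrow> 'a \<Rightarrow> bool) \<Rightarrow> bool" where
  "simple_graph V E \<longleftrightarrow> finite V \<and> (\<forall>u v. E u v \<longrightarrow> E v u)
     \<and> (\<forall>v. \<not> E v v) \<and> (\<forall>u v. E u v \<longrightarrow> u \<in> V \<and> v \<in> V)"

definition open_nbh :: "'a set \<Rightarrow> ('a \<Rightarrow> 'a \<Rightarrow> bool) \<Rightarrow> 'a \<Rightarrow> 'a set" where
  "open_nbh V E v = {u \<in> V. E v u}"

definition closed_nbh :: "'a set \<Rightarrow> ('a \<Rightarrow> 'a \<Rightarrow> bool) \<Rightarrow> 'a \<Rightarrow> 'a set" where
  "closed_nbh V E v = insert v (open_nbh V E v)"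

definition min_degree :: "'a set \<Rightarrow> ('a \<Rightarrow> 'a \<Rightarrow> bool) \<Rightarrow> nat" where
  "min_degree V E = Min ((\<lambda>v. card (open_nbh V E v)) ` V)"

definition is_k_seq :: "'a set \<Rightarrow> ('a \<Rightarrow> 'a \<Rightarrow> bool) \<Rightarrow> nat \<Rightarrow> 'a list \<Rightarrow> bool" where
  "is_k_seq V E k S \<longleftrightarrow> distinct S \<and> set S \<subseteq> V \<and>
     (\<forall>i < length S. \<exists>u \<in> closed_nbh V E (S ! i).
        card {j. j < i \<and> u \<in> closed_nbh V E (S ! j)} < k)"

definition is_kZ_seq :: "'a set \<Rightarrow> ('a \<Rightarrow> 'a \<Rightarrow> bool) \<Rightarrow> nat \<Rightarrow> 'a list \<Rightarrow> bool" where
  "is_kZ_seq V E k S \<longleftrightarrow> distinct S \<and> set S \<subseteq> V \<and>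
     (\<forall>i < length S. \<exists>u \<in> open_nbh V E (S ! i).
        card {j. j < i \<and> u \<in> closed_nbh V E (S ! j)} < k)"

definition is_kt_seq :: "'a set \<Rightarrow> ('a \<Rightarrow> 'a \<Rightarrow> bool) \<Rightarrow> nat \<Rightarrow> 'a list \<Rightarrow> bool" where
  "is_kt_seq V E k S \<longleftrightarrow> distinct S \<and> set S \<subseteq> V \<and>
     (\<forall>i < length S. \<exists>u \<in> open_nbh V E (S ! i).
        card {j. j < i \<and> u \<in> open_nbh V E (S ! j)} < k)"

definition gamma_gr_k :: "'a set \<Rightarrow> ('a \<Rightarrow> 'a \<Rightarrow> bool) \<Rightarrow> nat \<Rightarrow> nat" where
  "gamma_gr_k V E k = Max (length ` {S. is_k_seq V E k S})"

definition gamma_gr_Zk :: "'a set \<Rightarrow> ('a \<Rightarrow> 'a \<Rightarrow> bool) \<Rightarrow> nat \<Rightarrow> nat" where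
  "gamma_gr_Zk V E k = Max (length ` {S. is_kZ_seq V E k S})"

definition gamma_gr_tk :: "'a set \<Rightarrow> ('a \<Rightarrow> 'a \<Rightarrow> bool) \<Rightarrow> nat \<Rightarrow> nat" where
  "gamma_gr_tk V E k = Max (length ` {S. is_kt_seq V E k S})"

end

theory Submission
  imports Defs
begin

lemma card_set_inter:
  assumes "distinct S"
  shows "card (set S \<inter> A) = card {j. j < length S \<and> S ! j \<in> A}"
proof -
  have "set S \<inter> A = (nth S) ` {j. j < length S \<and> S ! j \<in> A}"
    by (auto simp: in_set_conv_nth)
  moreover have "inj_on (nth S) {j. j < length S \<and> S ! j \<in> A}"
    using assms by (intro inj_on_nth) auto
  ultimately show ?thesis by (simp add: card_image)
qed

lemma count_bound:
  assumes "distinct S" "S \<noteq> []"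
    and "card {j. j < length S - 1 \<and> S ! j \<in> A} < k"
  shows "card (set S \<inter> A) \<le> k"
proof -
  have "{j. j < length S \<and> S ! j \<in> A} \<subseteq> insert (length S - 1) {j. j < length S - 1 \<and> S ! j \<in> A}"
    by auto
  hence "card {j. j < length S \<and> S ! j \<in> A} \<le> card (insert (length S - 1) {j. j < length S - 1 \<and> S ! j \<in> A})"
    by (intro card_mono) auto
  also have "\<dots> \<le> Suc (card {j. j < length S - 1 \<and> S ! j \<in> A})"
    by (rule card_insert_le_m1) auto
  finally show ?thesis using assms card_set_inter[OF assms(1)] by simp
qed

lemma fin_seqs:
  assumes "finite V"
  shows "finite {S. distinct S \<and> set S \<subseteq> V}"
proof -
  have "{S. distinct S \<and> set S \<subseteq> V} \<subseteq> {xs. set xs \<subseteq> V \<and> length xs \<le> card V}"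
  proof safe
    fix S assume "distinct S" "set S \<subseteq> V"
    thus "length S \<le> card V" using distinct_card card_mono[OF assms] by metis
  qed
  thus ?thesis using finite_lists_length_le[OF assms] finite_subset by blast
qed

lemma max_le:
  assumes "finite V" "\<And>S. P S \<Longrightarrow> distinct S \<and> set S \<subseteq> V" "P []"
    "\<And>S. P S \<Longrightarrow> length S \<le> b"
  shows "Max (length ` {S. P S}) \<le> b"
proof -
  have "finite {S. P S}" using fin_seqs[OF assms(1)] assms(2)
    by (metis (mono_tags, lifting) mem_Collect_eq rev_finite_subset subsetI)
  thus ?thesis using assms(3,4) by (subst Max_le_iff) auto
qed

lemma deg_ge:
  assumes "simple_graph V E" "u \<in> V"
  shows "min_degree V E \<le> card (open_nbh V E u)"
  using assms unfolding min_degree_def simple_graph_def by (intro Min_le) auto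

theorem mainTheorem3:
  fixes V :: "'a set" and E :: "'a \<Rightarrow> 'a \<Rightarrow> bool" and k n \<delta> :: nat
  assumes "simple_graph V E" and "V \<noteq> {}"
    and "n = card V" and "\<delta> = min_degree V E" and "k \<ge> 1"
  shows "int (gamma_gr_tk V E k) \<le> int n - int \<delta> + int k
    \<and> gamma_gr_Zk V E k \<le> gamma_gr_k V E k
    \<and> int (gamma_gr_k V E k) \<le> int n - int \<delta> + int k - 1"
proof -
  have fin: "finite V" and sym: "\<And>u v. E u v \<Longrightarrow> E v u" and inV: "\<And>u v. E u v \<Longrightarrow> u \<in> V \<and> v \<in> V"
    and irr: "\<And>v. \<not> E v v"
    using assms(1) unfolding simple_graph_def by auto
  have onV: "open_nbh V E u \<subseteq> V" for u unfolding open_nbh_def by auto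
  obtain v0 where v0: "v0 \<in> V" using assms(2) by auto
  have dlt: "\<delta> \<le> n - 1"
  proof -
    have "open_nbh V E v0 \<subseteq> V - {v0}" using irr unfolding open_nbh_def by auto
    hence "card (open_nbh V E v0) \<le> card (V - {v0})" using fin by (intro card_mono) auto
    thus ?thesis using deg_ge[OF assms(1) v0] assms(3,4) v0 fin by simp
  qed
  have cardV: "card V \<ge> 1" using fin assms(2) by (simp add: Suc_leI card_gt_0_iff)
  have T: "length S \<le> n - \<delta> + k" if S: "is_kt_seq V E k S" for S
  proof (cases "S = []")
    case True thus ?thesis by simp
  next
    case False
    let ?m = "length S - 1"
    have d: "distinct S" and sV: "set S \<subseteq> V" using S unfolding is_kt_seq_def by auto
    obtain u where u: "u \<in> open_nbh V E (S ! ?m)"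
      and c: "card {j. j < ?m \<and> u \<in> open_nbh V E (S ! j)} < k"
      using S False unfolding is_kt_seq_def by (metis diff_less length_greater_0_conv zero_less_one)
    have uV: "u \<in> V" using u onV by auto
    have eq: "{j. j < ?m \<and> u \<in> open_nbh V E (S ! j)} = {j. j < ?m \<and> S ! j \<in> open_nbh V E u}"
      using sym inV unfolding open_nbh_def by blast
    have ci: "card (set S \<inter> open_nbh V E u) \<le> k"
      using count_bound[OF d False] c eq by simp
    have "card (set S \<union> open_nbh V E u) \<le> card V"
      using fin sV onV by (intro card_mono) auto
    moreover have "card (set S \<union> open_nbh V E u) + card (set S \<inter> open_nbh V E u) = card (set S) + card (open_nbh V E u)"
      using card_Un_Int[of "set S" "open_nbh V E u"] finite_subset[OF onV fin] by simp
    moreover have "\<delta> \<le> card (open_nbh V E u)" using deg_ge[OF assms(1) uV] assms(4) by simp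
    moreover have "card (set S) = length S" using d by (simp add: distinct_card)
    ultimately show ?thesis using ci assms(3) by linarith
  qed
  have K: "length S \<le> n - \<delta> + k - 1" if S: "is_k_seq V E k S" for S
  proof (cases "S = []")
    case True thus ?thesis by simp
  next
    case False
    let ?m = "length S - 1"
    have d: "distinct S" and sV: "set S \<subseteq> V" using S unfolding is_k_seq_def by auto
    obtain u where u: "u \<in> closed_nbh V E (S ! ?m)"
      and c: "card {j. j < ?m \<and> u \<in> closed_nbh V E (S ! j)} < k"
      using S False unfolding is_k_seq_def by (metis diff_less length_greater_0_conv zero_less_one)
    have cV: "closed_nbh V E w \<subseteq> V" if "w \<in> V" for w using that onV unfolding closed_nbh_def by auto
    have sm: "S ! ?m \<in> V" using sV False by (simp add: subset_iff)
    have uV: "u \<in> V" using u cV[OF sm] by auto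
    have eq: "{j. j < ?m \<and> u \<in> closed_nbh V E (S ! j)} = {j. j < ?m \<and> S ! j \<in> closed_nbh V E u}"
    proof -
      have "S ! j \<in> V" if "j < ?m" for j using that sV by (simp add: subset_iff)
      thus ?thesis using sym uV unfolding closed_nbh_def open_nbh_def by auto
    qed
    have ci: "card (set S \<inter> closed_nbh V E u) \<le> k"
      using count_bound[OF d False] c eq by simp
    have "card (set S \<union> closed_nbh V E u) \<le> card V"
      using fin sV cV[OF uV] by (intro card_mono) auto
    moreover have "card (set S \<union> closed_nbh V E u) + card (set S \<inter> closed_nbh V E u) = card (set S) + card (closed_nbh V E u)"
      using card_Un_Int[of "set S" "closed_nbh V E u"] finite_subset[OF cV[OF uV] fin] by simp
    moreover have "card (closed_nbh V E u) = Suc (card (open_nbh V E u))"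
      unfolding closed_nbh_def using irr fin onV
      by (subst card_insert_disjoint) (auto intro: finite_subset simp: open_nbh_def)
    moreover have "\<delta> \<le> card (open_nbh V E u)" using deg_ge[OF assms(1) uV] assms(4) by simp
    moreover have "card (set S) = length S" using d by (simp add: distinct_card)
    ultimately show ?thesis using ci assms(3) by linarith
  qed
  have Z: "is_k_seq V E k S" if "is_kZ_seq V E k S" for S
    using that unfolding is_kZ_seq_def is_k_seq_def closed_nbh_def by blast
  have g1: "gamma_gr_tk V E k \<le> n - \<delta> + k"
    unfolding gamma_gr_tk_def
    by (rule max_le[OF fin]) (simp_all add: T, auto simp: is_kt_seq_def)
  have g3: "gamma_gr_k V E k \<le> n - \<delta> + k - 1"
    unfolding gamma_gr_k_def
  proof (rule max_le[OF fin])
    show "\<And>S. is_k_seq V E k S \<Longrightarrow> length S \<le> n - \<delta> + k - 1" by (rule K)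
  qed (auto simp: is_k_seq_def)
  have finK: "finite {S. is_k_seq V E k S}"
    using fin_seqs[OF fin] by (rule finite_subset[rotated]) (auto simp: is_k_seq_def)
  have g2: "gamma_gr_Zk V E k \<le> gamma_gr_k V E k"
  proof -
    have "[] \<in> {S. is_kZ_seq V E k S}" by (simp add: is_kZ_seq_def)
    moreover have "finite {S. is_kZ_seq V E k S}"
      using finK Z by (metis (mono_tags, lifting) mem_Collect_eq rev_finite_subset subsetI)
    ultimately show ?thesis unfolding gamma_gr_Zk_def gamma_gr_k_def
      using Z finK by (subst Max_le_iff) (auto intro!: Max_ge)
  qed
  show ?thesis using g1 g2 g3 dlt assms(5) cardV assms(3) by linarith
qed

end
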